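(* Fix integers $n_0\le m\le n\le L-3$. Let $\sigma\in\Omega_L$ be a configuration with exactly $nm+1$ spins equal to $0$ and all other spins equal to $-1$, such that $nm$ of the $0$-spins form an $n\times m$ rectangle $Q$ and the remaining $0$-spin sits at a site $z\notin Q$ whose unique nearest neighbour in $Q$ is a corner of $Q$ (so that exactly one $-1$-spin has two $0$-spins as nearest neighbours). Let $\sigma_-$ be obtained from $\sigma$ by flipping the spin at $z$ to $-1$, and $\sigma_+$ by flipping to $0$ the unique $-1$-spin having two $0$-spins as neighbours. Then there exists a constant $C_0$ (depending only on $h$) such that $$\big|p_\beta(\sigma,\sigma_-)-\tfrac12\big|\le C_0\,\delta_1(\beta),\qquad \big|p_\beta(\sigma,\sigma_+)-\tfrac12\big|\le C_0\,\delta_1(\beta),$$ where $\delta_1(\beta)=e^{-h\beta}+|\Lambda_L|^{1/2}e^{-(2-h)\beta}+|\Lambda_L|e^{-(4-h)\beta}$.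
   Context: Blume–Capel model. Fix $h\in(0,1)$ with $2/h\notin\mathbb Z$, $n_0=\lfloor 2/h\rfloor$. $\Lambda_L$ is the two-dimensional discrete torus of side $L$, $\Omega_L=\{-1,0,1\}^{\Lambda_L}$. Hamiltonian $\mathbb H(\sigma)=\sum(\sigma(y)-\sigma(x))^2-h\sum_x\sigma(x)$, first sum over unordered nearest-neighbour pairs. $\sigma^{x,\pm}$: replace $\sigma(x)$ by $\sigma(x)\pm1$ modulo $3$ in $\{-1,0,1\}$. Jump rates $R_\beta(\sigma,\sigma^{x,\pm})=\exp\{-\beta[\mathbb H(\sigma^{x,\pm})-\mathbb H(\sigma)]_+\}$, holding rate $\lambda_\beta(\sigma)=\sum_{x,\pm}R_\beta(\sigma,\sigma^{x,\pm})$, and jump probabilities $p_\beta(\sigma,\sigma')=R_\beta(\sigma,\sigma')/\lambda_\beta(\sigma)$. *)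

theory Defs
  imports Complex_Main
begin

type_synonym site = "nat \<times> nat"
type_synonym config = "site \<Rightarrow> int"

definition sites :: "nat \<Rightarrow> site set" where
  "sites L = {0..<L} \<times> {0..<L}"

definition right :: "nat \<Rightarrow> site \<Rightarrow> site" where
  "right L x = ((fst x + 1) mod L, snd x)"
definition left :: "nat \<Rightarrow> site \<Rightarrow> site" where
  "left L x = ((fst x + L - 1) mod L, snd x)"
definition up :: "nat \<Rightarrow> site \<Rightarrow> site" where
  "up L x = (fst x, (snd x + 1) mod L)"
definition down :: "nat \<Rightarrow> site \<Rightarrow> site" where
  "down L x = (fst x, (snd x + L - 1) mod L)"

definition nbrs :: "nat \<Rightarrow> site \<Rightarrow> site set" where
  "nbrs L x = {right L x, left L x, up L x, down L x}"

text \<open>Configuration space Omega_L (values outside the torus are irrelevant).\<close>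
definition Omega :: "nat \<Rightarrow> config set" where
  "Omega L = {\<sigma>. \<forall>x\<in>sites L. \<sigma> x \<in> {-1, 0, 1}}"

text \<open>Hamiltonian; each unordered nearest-neighbour pair is counted once
  via its right and up edges (L \<ge> 3).\<close>
definition H :: "nat \<Rightarrow> real \<Rightarrow> config \<Rightarrow> real" where
  "H L h \<sigma> = (\<Sum>x\<in>sites L. real_of_int ((\<sigma> (right L x) - \<sigma> x)^2 + (\<sigma> (up L x) - \<sigma> x)^2))
              - h * (\<Sum>x\<in>sites L. real_of_int (\<sigma> x))"

text \<open>sigma^{x,s}, s = 1 or -1: replace sigma(x) by sigma(x)+s modulo 3 in {-1,0,1}.\<close>
definition flip :: "config \<Rightarrow> site \<Rightarrow> int \<Rightarrow> config" where
  "flip \<sigma> x s = \<sigma>(x := ((\<sigma> x + s + 1) mod 3) - 1)"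

definition R :: "nat \<Rightarrow> real \<Rightarrow> real \<Rightarrow> config \<Rightarrow> config \<Rightarrow> real" where
  "R L h \<beta> \<sigma> \<sigma>' =
     (if \<exists>x\<in>sites L. \<exists>s\<in>{1, -1::int}. \<sigma>' = flip \<sigma> x s
      then exp (- \<beta> * max 0 (H L h \<sigma>' - H L h \<sigma>)) else 0)"

definition holding_rate :: "nat \<Rightarrow> real \<Rightarrow> real \<Rightarrow> config \<Rightarrow> real" where
  "holding_rate L h \<beta> \<sigma> = (\<Sum>x\<in>sites L. \<Sum>s\<in>{1, -1::int}. R L h \<beta> \<sigma> (flip \<sigma> x s))"

definition p :: "nat \<Rightarrow> real \<Rightarrow> real \<Rightarrow> config \<Rightarrow> config \<Rightarrow> real" where
  "p L h \<beta> \<sigma> \<sigma>' = R L h \<beta> \<sigma> \<sigma>' / holding_rate L h \<beta> \<sigma>"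

definition rect :: "nat \<Rightarrow> site \<Rightarrow> nat \<Rightarrow> nat \<Rightarrow> site set" where
  "rect L c w v = {((fst c + i) mod L, (snd c + j) mod L) | i j. i < w \<and> j < v}"

definition corners :: "nat \<Rightarrow> site \<Rightarrow> nat \<Rightarrow> nat \<Rightarrow> site set" where
  "corners L c w v = {((fst c + i) mod L, (snd c + j) mod L) | i j. i \<in> {0, w - 1} \<and> j \<in> {0, v - 1}}"

definition delta1 :: "nat \<Rightarrow> real \<Rightarrow> real \<Rightarrow> real" where
  "delta1 L h \<beta> = exp (- h * \<beta>) + sqrt (real (card (sites L))) * exp (- (2 - h) * \<beta>)
                   + real (card (sites L)) * exp (- (4 - h) * \<beta>)"

end

theory Submission
  imports Defs
begin

lemma modsuc_nat: "(x::nat) < L \<Longrightarrow> (x + 1) mod L = (if x = L - 1 then 0 else x + 1)"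
  by (cases "x = L - 1") (auto simp: Suc_diff_1)

lemma modpred_nat: "(x::nat) < L \<Longrightarrow> (x + L - 1) mod L = (if x = 0 then L - 1 else x - 1)"
proof (cases "x = 0")
  case False
  assume "x < L"
  then have "x + L - 1 = (x - 1) + L" using False by simp
  then have "(x + L - 1) mod L = ((x - 1) + L) mod L" by (simp only:)
  also have "\<dots> = x - 1" using \<open>x < L\<close> by simp
  finally have "(x + L - 1) mod L = x - 1" .
  with False show ?thesis by simp
qed simp

lemma tfacts:
  assumes "t < L" "(3::nat) \<le> L"
  shows "(t + 1) mod L \<noteq> t" "(t + L - 1) mod L \<noteq> t" "(t + 1) mod L \<noteq> (t + L - 1) mod L"
   "((t + L - 1) mod L + 1) mod L = t" "((t + 1) mod L + L - 1) mod L = t"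
proof -
  have a: "(t + L - 1) mod L < L" "(t + 1) mod L < L" using assms by auto
  show "(t + 1) mod L \<noteq> t" "(t + L - 1) mod L \<noteq> t" "(t + 1) mod L \<noteq> (t + L - 1) mod L"
    unfolding modsuc_nat[OF assms(1)] modpred_nat[OF assms(1)] using assms by auto
  show "((t + L - 1) mod L + 1) mod L = t"
    unfolding modsuc_nat[OF a(1)] unfolding modpred_nat[OF assms(1)] using assms by auto
  show "((t + 1) mod L + L - 1) mod L = t"
    unfolding modpred_nat[OF a(2)] unfolding modsuc_nat[OF assms(1)] using assms by auto
qed

lemma sites_iff: "x \<in> sites L \<longleftrightarrow> fst x < L \<and> snd x < L"
  by (cases x) (auto simp: sites_def)

lemma nb_sites:
  assumes "x \<in> sites L"
  shows "right L x \<in> sites L" "left L x \<in> sites L" "up L x \<in> sites L" "down L x \<in> sites L"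
  using assms by (auto simp: sites_iff right_def left_def up_def down_def)

lemma nb_facts:
  assumes "x \<in> sites L" "L \<ge> 3"
  shows "right L x \<noteq> x" "up L x \<noteq> x" "left L x \<noteq> x" "down L x \<noteq> x"
    "right L (left L x) = x" "up L (down L x) = x"
    "up L (left L x) \<noteq> x" "right L (down L x) \<noteq> x" "left L x \<noteq> down L x"
    "left L (right L x) = x" "down L (up L x) = x"
proof -
  have x: "fst x < L" "snd x < L" using assms(1) by (auto simp: sites_iff)
  note A = tfacts[OF x(1) assms(2)] and B = tfacts[OF x(2) assms(2)]
  show "right L x \<noteq> x" "up L x \<noteq> x" "left L x \<noteq> x" "down L x \<noteq> x"
    "right L (left L x) = x" "up L (down L x) = x"
    "up L (left L x) \<noteq> x" "right L (down L x) \<noteq> x" "left L x \<noteq> down L x"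
    "left L (right L x) = x" "down L (up L x) = x"
    using A B by (simp_all only: right_def left_def up_def down_def prod_eq_iff fst_conv snd_conv) simp_all
qed

lemma nb_distinct:
  assumes "x \<in> sites L" "L \<ge> 3"
  shows "right L x \<noteq> left L x" "right L x \<noteq> up L x" "right L x \<noteq> down L x"
    "left L x \<noteq> up L x" "left L x \<noteq> down L x" "up L x \<noteq> down L x"
proof -
  have x: "fst x < L" "snd x < L" using assms(1) by (auto simp: sites_iff)
  note A = tfacts[OF x(1) assms(2)] and B = tfacts[OF x(2) assms(2)]
  show "right L x \<noteq> left L x" "right L x \<noteq> up L x" "right L x \<noteq> down L x"
    "left L x \<noteq> up L x" "left L x \<noteq> down L x" "up L x \<noteq> down L x"
    using A B by (simp_all only: right_def left_def up_def down_def prod_eq_iff fst_conv snd_conv) simp_all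
qed

lemma nb_sym:
  assumes "x \<in> sites L" "z \<in> sites L" "L \<ge> 3" "z \<in> nbrs L x"
  shows "x \<in> nbrs L z"
  using assms nb_facts[OF assms(1,3)] by (auto simp: nbrs_def)

definition Fterm :: "nat \<Rightarrow> config \<Rightarrow> site \<Rightarrow> int" where
 "Fterm L \<sigma> x = (\<sigma> (right L x) - \<sigma> x)^2 + (\<sigma> (up L x) - \<sigma> x)^2"

lemma H_alt: "H L h \<sigma> = (\<Sum>x\<in>sites L. real_of_int (Fterm L \<sigma> x)) - h * (\<Sum>x\<in>sites L. real_of_int (\<sigma> x))"
  by (simp add: H_def Fterm_def)

lemma dH:
  assumes x: "x \<in> sites L" and L: "L \<ge> 3"
  shows "H L h (\<sigma>(x := v)) - H L h \<sigma> =
    real_of_int ((\<sigma> (right L x) - v)^2 - (\<sigma> (right L x) - \<sigma> x)^2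
     + (\<sigma> (up L x) - v)^2 - (\<sigma> (up L x) - \<sigma> x)^2
     + (v - \<sigma> (left L x))^2 - (\<sigma> x - \<sigma> (left L x))^2
     + (v - \<sigma> (down L x))^2 - (\<sigma> x - \<sigma> (down L x))^2) - h * real_of_int (v - \<sigma> x)"
proof -
  note F = nb_facts[OF x L]
  let ?s = "\<sigma>(x := v)"
  define G where "G y = Fterm L ?s y - Fterm L \<sigma> y" for y
  have fin: "finite (sites L)" by (simp add: sites_def)
  have G0: "G y = 0" if "y \<in> sites L - {x, left L x, down L x}" for y
  proof -
    have y: "y \<in> sites L" "y \<noteq> x" "y \<noteq> left L x" "y \<noteq> down L x" using that by auto
    have "right L y \<noteq> x" using y nb_facts[OF y(1) L] by metis
    moreover have "up L y \<noteq> x" using y nb_facts[OF y(1) L] by metis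
    ultimately show ?thesis using y by (simp add: G_def Fterm_def)
  qed
  have sub: "{x, left L x, down L x} \<subseteq> sites L" using x nb_sites[OF x] by auto
  have "(\<Sum>y\<in>sites L. G y) = (\<Sum>y\<in>{x, left L x, down L x}. G y)"
    by (rule sum.mono_neutral_right[OF fin sub]) (use G0 in auto)
  also have "\<dots> = G x + G (left L x) + G (down L x)"
    using F by (simp add: add.assoc)
  also have "\<dots> = (\<sigma> (right L x) - v)^2 - (\<sigma> (right L x) - \<sigma> x)^2
     + (\<sigma> (up L x) - v)^2 - (\<sigma> (up L x) - \<sigma> x)^2
     + (v - \<sigma> (left L x))^2 - (\<sigma> x - \<sigma> (left L x))^2
     + (v - \<sigma> (down L x))^2 - (\<sigma> x - \<sigma> (down L x))^2"
    using F by (simp add: G_def Fterm_def)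
  finally have S1: "(\<Sum>y\<in>sites L. G y) = \<dots>" .
  have S1': "(\<Sum>y\<in>sites L. real_of_int (Fterm L ?s y)) - (\<Sum>y\<in>sites L. real_of_int (Fterm L \<sigma> y))
     = real_of_int (\<Sum>y\<in>sites L. G y)"
    by (simp add: G_def sum_subtractf)
  have S2: "(\<Sum>y\<in>sites L. real_of_int (?s y)) = (\<Sum>y\<in>sites L. real_of_int (\<sigma> y)) + real_of_int (v - \<sigma> x)"
  proof -
    have "(\<Sum>y\<in>sites L. real_of_int (?s y)) = real_of_int (?s x) + (\<Sum>y\<in>sites L - {x}. real_of_int (?s y))"
      using fin x by (simp add: sum.remove)
    also have "(\<Sum>y\<in>sites L - {x}. real_of_int (?s y)) = (\<Sum>y\<in>sites L - {x}. real_of_int (\<sigma> y))"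
      by (rule sum.cong) auto
    also have "(\<Sum>y\<in>sites L. real_of_int (\<sigma> y)) = real_of_int (\<sigma> x) + (\<Sum>y\<in>sites L - {x}. real_of_int (\<sigma> y))"
      using fin x by (simp add: sum.remove)
    ultimately show ?thesis by simp
  qed
  have "H L h ?s - H L h \<sigma> = ((\<Sum>y\<in>sites L. real_of_int (Fterm L ?s y)) - (\<Sum>y\<in>sites L. real_of_int (Fterm L \<sigma> y)))
      - h * ((\<Sum>y\<in>sites L. real_of_int (?s y)) - (\<Sum>y\<in>sites L. real_of_int (\<sigma> y)))"
    unfolding H_alt by (simp add: algebra_simps)
  also have "\<dots> = real_of_int (\<Sum>y\<in>sites L. G y) - h * real_of_int (v - \<sigma> x)"
    by (simp only: S1' S2) simp
  also have "\<dots> = real_of_int ((\<sigma> (right L x) - v)^2 - (\<sigma> (right L x) - \<sigma> x)^2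
     + (\<sigma> (up L x) - v)^2 - (\<sigma> (up L x) - \<sigma> x)^2
     + (v - \<sigma> (left L x))^2 - (\<sigma> x - \<sigma> (left L x))^2
     + (v - \<sigma> (down L x))^2 - (\<sigma> x - \<sigma> (down L x))^2) - h * real_of_int (v - \<sigma> x)"
    by (simp only: S1)
  finally show ?thesis .
qed

definition cI :: "nat \<Rightarrow> nat \<Rightarrow> nat \<Rightarrow> int" where
  "cI L c0 t = (int t - int c0 + 1) mod int L"

lemma cI_range: "L > 0 \<Longrightarrow> 0 \<le> cI L c0 t \<and> cI L c0 t < int L"
  by (simp add: cI_def)

lemma modeqI: "(a::int) - b = m * k \<Longrightarrow> a mod m = b mod m"
  by (metis add.commute diff_eq_eq mod_mult_self2)

lemma cI_suc: "cI L c0 ((t+1) mod L) = (cI L c0 t + 1) mod int L"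
proof -
  have "int ((t+1) mod L) = (int t + 1) mod int L" by (simp add: of_nat_mod add.commute)
  then have "cI L c0 ((t+1) mod L) = ((int t + 1) mod int L - int c0 + 1) mod int L" by (simp add: cI_def)
  also have "\<dots> = ((int t - int c0 + 1) mod int L + 1) mod int L"
    by (rule modeqI[where k = "(int t - int c0 + 1) div int L - (int t + 1) div int L"])
       (simp only: minus_div_mult_eq_mod[symmetric] algebra_simps)
  finally show ?thesis by (simp add: cI_def)
qed

lemma cI_pred: "L > 0 \<Longrightarrow> cI L c0 ((t + L - 1) mod L) = (cI L c0 t - 1) mod int L"
proof -
  assume "L > 0"
  then have "int ((t + L - 1) mod L) = (int t + int L - 1) mod int L" by (simp add: of_nat_mod of_nat_diff)
  then have "cI L c0 ((t + L - 1) mod L) = ((int t + int L - 1) mod int L - int c0 + 1) mod int L" by (simp add: cI_def)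
  also have "\<dots> = ((int t - int c0 + 1) mod int L - 1) mod int L"
    by (rule modeqI[where k = "1 - (int t + int L - 1) div int L + (int t - int c0 + 1) div int L"])
       (simp only: minus_div_mult_eq_mod[symmetric] algebra_simps)
  finally show ?thesis by (simp add: cI_def)
qed

lemma cI_shift: "cI L c0 ((c0 + i) mod L) = (int i + 1) mod int L"
proof -
  have "int ((c0 + i) mod L) = (int c0 + int i) mod int L" by (simp add: of_nat_mod)
  then have "cI L c0 ((c0 + i) mod L) = ((int c0 + int i) mod int L - int c0 + 1) mod int L" by (simp add: cI_def)
  also have "\<dots> = (int i + 1) mod int L"
    by (rule modeqI[where k = "- ((int c0 + int i) div int L)"])
       (simp only: minus_div_mult_eq_mod[symmetric] algebra_simps)
  finally show ?thesis .
qed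

lemma zsuc: "0 \<le> (t::int) \<Longrightarrow> t < L \<Longrightarrow> (t+1) mod L = (if t = L - 1 then 0 else t+1)"
  by auto

lemma zpred: "0 \<le> (t::int) \<Longrightarrow> t < L \<Longrightarrow> (t-1) mod L = (if t = 0 then L - 1 else t - 1)"
proof (cases "t = 0")
  case True
  assume "t < L"
  then have "(-1) mod L = L - 1" using True by (simp add: zmod_minus1)
  then show ?thesis using True by simp
qed auto

lemma cI_inj: assumes "t < L" "t' < L" "cI L c0 t = cI L c0 t'" shows "t = t'"
proof -
  have "int t mod int L = ((int t - int c0 + 1) + (int c0 - 1)) mod int L" by simp
  also have "\<dots> = (cI L c0 t + (int c0 - 1)) mod int L" unfolding cI_def
    by (rule modeqI[where k = "(int t - int c0 + 1) div int L"])
       (simp only: minus_div_mult_eq_mod[symmetric] algebra_simps)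
  also have "\<dots> = (cI L c0 t' + (int c0 - 1)) mod int L" using assms by simp
  also have "\<dots> = int t' mod int L" unfolding cI_def
    by (rule modeqI[where k = "- ((int t' - int c0 + 1) div int L)"])
       (simp only: minus_div_mult_eq_mod[symmetric] algebra_simps)
  finally show ?thesis using assms by simp
qed

lemma cI_back: assumes "t < L" "1 \<le> cI L c0 t"
  shows "(c0 + nat (cI L c0 t - 1)) mod L = t"
proof -
  have "int ((c0 + nat (cI L c0 t - 1)) mod L) = (int c0 + (cI L c0 t - 1)) mod int L"
    using assms by (simp add: of_nat_mod)
  also have "\<dots> = (int c0 + (int t - int c0 + 1) - 1) mod int L" unfolding cI_def
    by (rule modeqI[where k = "- ((int t - int c0 + 1) div int L)"])
       (simp only: minus_div_mult_eq_mod[symmetric] algebra_simps)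
  also have "\<dots> = int t" using assms by simp
  finally show ?thesis by simp
qed

lemma sites_key_inj:
  assumes "x \<in> sites L" "x' \<in> sites L" "cI L c1 (fst x) = cI L c1 (fst x')" "cI L c2 (snd x) = cI L c2 (snd x')"
  shows "x = x'"
  using assms cI_inj by (metis prod.expand sites_iff)

lemma rect_iff:
  assumes c: "c \<in> sites L" and x: "x \<in> sites L" and ab: "a < L" "b < L"
  shows "x \<in> rect L c a b \<longleftrightarrow> (1 \<le> cI L (fst c) (fst x) \<and> cI L (fst c) (fst x) \<le> int a
      \<and> 1 \<le> cI L (snd c) (snd x) \<and> cI L (snd c) (snd x) \<le> int b)"
proof
  assume "x \<in> rect L c a b"
  then obtain i j where ij: "x = ((fst c + i) mod L, (snd c + j) mod L)" "i < a" "j < b"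
    by (auto simp: rect_def)
  then show "(1 \<le> cI L (fst c) (fst x) \<and> cI L (fst c) (fst x) \<le> int a
      \<and> 1 \<le> cI L (snd c) (snd x) \<and> cI L (snd c) (snd x) \<le> int b)"
    using ab by (simp add: cI_shift)
next
  assume H: "(1 \<le> cI L (fst c) (fst x) \<and> cI L (fst c) (fst x) \<le> int a
      \<and> 1 \<le> cI L (snd c) (snd x) \<and> cI L (snd c) (snd x) \<le> int b)"
  have x1: "fst x < L" "snd x < L" using x by (auto simp: sites_iff)
  have "x = ((fst c + nat (cI L (fst c) (fst x) - 1)) mod L, (snd c + nat (cI L (snd c) (snd x) - 1)) mod L)"
    using cI_back[OF x1(1)] cI_back[OF x1(2)] H by (simp add: prod_eq_iff)
  moreover have "nat (cI L (fst c) (fst x) - 1) < a" "nat (cI L (snd c) (snd x) - 1) < b" using H by auto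
  ultimately show "x \<in> rect L c a b" unfolding rect_def by blast
qed

lemma corner_coords:
  assumes "y \<in> corners L c a b" "1 \<le> a" "a < L" "1 \<le> b" "b < L"
  shows "cI L (fst c) (fst y) \<in> {1, int a} \<and> cI L (snd c) (snd y) \<in> {1, int b}"
proof -
  obtain i j where ij: "y = ((fst c + i) mod L, (snd c + j) mod L)" "i \<in> {0, a - 1}" "j \<in> {0, b - 1}"
    using assms(1) by (auto simp: corners_def)
  then show ?thesis using assms by (auto simp: cI_shift of_nat_diff)
qed

lemma card_strip1:
  assumes "finite K"
  shows "card {x \<in> sites L. cI L c0 (fst x) \<in> K} \<le> card K * L"
proof -
  have "card {x \<in> sites L. cI L c0 (fst x) \<in> K} \<le> card (K \<times> {0..<L})"
  proof (rule card_inj_on_le[where f = "\<lambda>x. (cI L c0 (fst x), snd x)"])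
    show "inj_on (\<lambda>x. (cI L c0 (fst x), snd x)) {x \<in> sites L. cI L c0 (fst x) \<in> K}"
      by (auto simp: inj_on_def sites_iff prod_eq_iff intro: cI_inj)
    show "(\<lambda>x. (cI L c0 (fst x), snd x)) ` {x \<in> sites L. cI L c0 (fst x) \<in> K} \<subseteq> K \<times> {0..<L}"
      by (auto simp: sites_iff)
    show "finite (K \<times> {0..<L})" using assms by simp
  qed
  then show ?thesis by (simp add: card_cartesian_product)
qed

lemma card_strip2:
  assumes "finite K"
  shows "card {x \<in> sites L. cI L c0 (snd x) \<in> K} \<le> card K * L"
proof -
  have "card {x \<in> sites L. cI L c0 (snd x) \<in> K} \<le> card ({0..<L} \<times> K)"
  proof (rule card_inj_on_le[where f = "\<lambda>x. (fst x, cI L c0 (snd x))"])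
    show "inj_on (\<lambda>x. (fst x, cI L c0 (snd x))) {x \<in> sites L. cI L c0 (snd x) \<in> K}"
      by (auto simp: inj_on_def sites_iff prod_eq_iff intro: cI_inj)
    show "(\<lambda>x. (fst x, cI L c0 (snd x))) ` {x \<in> sites L. cI L c0 (snd x) \<in> K} \<subseteq> {0..<L} \<times> K"
      by (auto simp: sites_iff)
    show "finite ({0..<L} \<times> K)" using assms by simp
  qed
  then show ?thesis by (simp add: card_cartesian_product mult.commute)
qed

definition nx :: "int \<Rightarrow> int \<Rightarrow> int" where "nx L i = (if i = L - 1 then 0 else i + 1)"
definition px :: "int \<Rightarrow> int \<Rightarrow> int" where "px L i = (if i = 0 then L - 1 else i - 1)"
definition inQ' :: "int \<Rightarrow> int \<Rightarrow> int \<Rightarrow> int \<Rightarrow> bool" where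
  "inQ' a b i j = (1 \<le> i \<and> i \<le> a \<and> 1 \<le> j \<and> j \<le> b)"
definition ind :: "bool \<Rightarrow> int" where "ind P = (if P then 1 else 0)"
definition kq :: "int \<Rightarrow> int \<Rightarrow> int \<Rightarrow> int \<Rightarrow> int \<Rightarrow> int" where
  "kq L a b i j = ind (inQ' a b (nx L i) j) + ind (inQ' a b (px L i) j) + ind (inQ' a b i (nx L j)) + ind (inQ' a b i (px L j))"

context
  fixes L a b i j :: int
  assumes r: "0 \<le> i" "i < L" "0 \<le> j" "j < L" "2 \<le> a" "2 \<le> b" "a + 3 \<le> L" "b + 3 \<le> L"
begin

lemma inQ_nbrs:
  "inQ' a b (nx L i) j \<longleftrightarrow> 0 \<le> i \<and> i \<le> a - 1 \<and> 1 \<le> j \<and> j \<le> b"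
  "inQ' a b (px L i) j \<longleftrightarrow> 2 \<le> i \<and> i \<le> a + 1 \<and> 1 \<le> j \<and> j \<le> b"
  "inQ' a b i (nx L j) \<longleftrightarrow> 1 \<le> i \<and> i \<le> a \<and> 0 \<le> j \<and> j \<le> b - 1"
  "inQ' a b i (px L j) \<longleftrightarrow> 1 \<le> i \<and> i \<le> a \<and> 2 \<le> j \<and> j \<le> b + 1"
  using r by (auto simp: inQ'_def nx_def px_def)

lemma geo1: "\<not> inQ' a b i j \<Longrightarrow> kq L a b i j \<le> 1"
  unfolding kq_def inQ_nbrs using r by (auto simp: ind_def inQ'_def)

lemma geo2: "inQ' a b i j \<Longrightarrow> kq L a b i j \<ge> 2"
  unfolding kq_def inQ_nbrs using r by (auto simp: ind_def inQ'_def)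

lemma geo3: "inQ' a b i j \<Longrightarrow> kq L a b i j \<ge> 3 \<or> ((i = 1 \<or> i = a) \<and> (j = 1 \<or> j = b))"
  unfolding kq_def inQ_nbrs using r by (auto simp: ind_def inQ'_def)

lemma geo4: "inQ' a b i j \<Longrightarrow> kq L a b i j = 4 \<or> i = 1 \<or> i = a \<or> j = 1 \<or> j = b"
  unfolding kq_def inQ_nbrs using r by (auto simp: ind_def inQ'_def)

lemma geo5: "\<not> inQ' a b i j \<Longrightarrow> i \<noteq> 0 \<Longrightarrow> i \<noteq> a + 1 \<Longrightarrow> j \<noteq> 0 \<Longrightarrow> j \<noteq> b + 1 \<Longrightarrow> kq L a b i j = 0"
  unfolding kq_def inQ_nbrs using r by (auto simp: ind_def inQ'_def)

lemma geo6: "\<not> inQ' a b i j \<Longrightarrow> kq L a b i j \<ge> 1 \<Longrightarrow>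
   (1 \<le> i \<and> i \<le> a \<and> (j = 0 \<or> j = b + 1)) \<or> (1 \<le> j \<and> j \<le> b \<and> (i = 0 \<or> i = a + 1))"
proof -
  assume nq: "\<not> inQ' a b i j" and k: "kq L a b i j \<ge> 1"
  have "inQ' a b (nx L i) j \<or> inQ' a b (px L i) j \<or> inQ' a b i (nx L j) \<or> inQ' a b i (px L j)"
    using k by (rule contrapos_pp) (simp add: kq_def ind_def)
  then show ?thesis using nq r unfolding inQ_nbrs by (auto simp: inQ'_def)
qed

end

definition zpos :: "int \<Rightarrow> int \<Rightarrow> int \<Rightarrow> int \<Rightarrow> bool" where
  "zpos a b iz jz = ((iz = 0 \<and> (jz = 1 \<or> jz = b)) \<or> (iz = a + 1 \<and> (jz = 1 \<or> jz = b))
     \<or> (jz = 0 \<and> (iz = 1 \<or> iz = a)) \<or> (jz = b + 1 \<and> (iz = 1 \<or> iz = a)))"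

definition adj :: "int \<Rightarrow> int \<Rightarrow> int \<Rightarrow> int \<Rightarrow> int \<Rightarrow> bool" where
  "adj L i j i' j' = ((i' = nx L i \<and> j' = j) \<or> (i' = px L i \<and> j' = j) \<or> (i' = i \<and> j' = nx L j) \<or> (i' = i \<and> j' = px L j))"

lemma zpos_lemma:
  assumes r: "0 \<le> iz" "iz < L" "0 \<le> jz" "jz < L" "2 \<le> a" "2 \<le> b" "a + 3 \<le> L" "b + 3 \<le> L"
    and nq: "\<not> inQ' a b iz jz" and y: "iy = 1 \<or> iy = a" "jy = 1 \<or> jy = b" and ad: "adj L iz jz iy jy"
  shows "zpos a b iz jz"
  using assms unfolding zpos_def adj_def nx_def px_def inQ'_def by smt

definition xf1 :: "int \<Rightarrow> int \<Rightarrow> int \<Rightarrow> int \<Rightarrow> int" where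
  "xf1 a b iz jz = (if iz = 0 then 0 else if iz = a + 1 then a + 1 else if iz = 1 then 2 else a - 1)"
definition xf2 :: "int \<Rightarrow> int \<Rightarrow> int \<Rightarrow> int \<Rightarrow> int" where
  "xf2 a b iz jz = (if iz = 0 \<or> iz = a + 1 then (if jz = 1 then 2 else b - 1) else if jz = 0 then 0 else b + 1)"

lemma xpos_lemma:
  assumes r: "0 \<le> ix" "ix < L" "0 \<le> jx" "jx < L" "2 \<le> a" "2 \<le> b" "a + 3 \<le> L" "b + 3 \<le> L"
    and ob: "(1 \<le> ix \<and> ix \<le> a \<and> (jx = 0 \<or> jx = b + 1)) \<or> (1 \<le> jx \<and> jx \<le> b \<and> (ix = 0 \<or> ix = a + 1))"
    and zp: "zpos a b iz jz" and ad: "adj L ix jx iz jz"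
  shows "ix = xf1 a b iz jz \<and> jx = xf2 a b iz jz"
  using assms unfolding zpos_def adj_def nx_def px_def xf1_def xf2_def by smt

lemma card4_filter:
  assumes "r \<noteq> l" "r \<noteq> u" "r \<noteq> d" "l \<noteq> u" "l \<noteq> d" "u \<noteq> d"
  shows "int (card {y \<in> {r, l, u, d}. P y}) = ind (P r) + ind (P l) + ind (P u) + ind (P d)"
proof -
  have e: "{y \<in> {r, l, u, d}. P y} = (if P r then {r} else {}) \<union> (if P l then {l} else {})
     \<union> (if P u then {u} else {}) \<union> (if P d then {d} else {})" by auto
  show ?thesis using assms unfolding e
    by (cases "P r"; cases "P l"; cases "P u"; cases "P d") (auto simp: ind_def card_insert_if)
qed

lemma sum_if_const: "finite A \<Longrightarrow> (\<Sum>x\<in>A. if P x then (c::real) else 0) = real (card {x\<in>A. P x}) * c"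
  by (simp add: sum.inter_filter[symmetric])

lemma Dform:
  assumes "r \<in> {-1, 0::int}" "l \<in> {-1, 0}" "u \<in> {-1, 0}" "d \<in> {-1, 0}"
  shows "(r - v)^2 - (r - s0)^2 + (u - v)^2 - (u - s0)^2 + (v - l)^2 - (s0 - l)^2 + (v - d)^2 - (s0 - d)^2
   = 4*(v^2 - s0^2) - 2*(v - s0)*(ind (r = 0) + ind (l = 0) + ind (u = 0) + ind (d = 0) - 4)"
  using assms by (auto simp: ind_def algebra_simps power2_eq_square)

lemma expb: "0 < \<beta> \<Longrightarrow> t \<le> \<Delta> \<Longrightarrow> exp (- \<beta> * max 0 \<Delta>) \<le> exp (- t * (\<beta>::real))"
proof -
  assume b: "0 < \<beta>" and t: "t \<le> \<Delta>"
  have "\<beta> * t \<le> \<beta> * max 0 \<Delta>" using b t by (intro mult_left_mono) auto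
  then show ?thesis by (simp add: mult.commute)
qed

lemma exp1: "\<Delta> \<le> 0 \<Longrightarrow> exp (- \<beta> * max 0 (\<Delta>::real)) = 1"
  by (simp add: max_def)

lemma ind_le: "ind P \<le> ind (P \<or> Q)" "ind (P \<or> Q) \<le> ind P + ind Q" "0 \<le> ind P" "ind P \<le> 1"
  by (auto simp: ind_def)

lemma general:
  fixes h \<beta> :: real and L a b :: nat and \<sigma> :: config and c z w y :: site
  assumes h: "0 < h" "h < 1" and ab: "2 \<le> a" "2 \<le> b" "a + 3 \<le> L" "b + 3 \<le> L" and \<beta>: "0 < \<beta>"
    and c: "c \<in> sites L" and z: "z \<in> sites L" "z \<notin> rect L c a b"
    and sdef: "\<forall>x\<in>sites L. \<sigma> x = (if x \<in> rect L c a b \<or> x = z then 0 else -1)"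
    and y: "nbrs L z \<inter> rect L c a b = {y}" "y \<in> corners L c a b"
    and w: "w \<in> sites L" "\<sigma> w = -1" "card {y \<in> nbrs L w. \<sigma> y = 0} = 2"
  shows "\<bar>p L h \<beta> \<sigma> (\<sigma>(z := -1)) - 1/2\<bar> \<le> 5 * delta1 L h \<beta>
       \<and> \<bar>p L h \<beta> \<sigma> (\<sigma>(w := 0)) - 1/2\<bar> \<le> 5 * delta1 L h \<beta>"
proof -
  have L3: "L \<ge> 3" and L0: "L > 0" using ab by auto
  define I where "I (x::site) = cI L (fst c) (fst x)" for x
  define J where "J (x::site) = cI L (snd c) (snd x)" for x
  define Li where "Li = int L"
  define inQ where "inQ (x::site) = inQ' (int a) (int b) (I x) (J x)" for x
  have Ir: "0 \<le> I x" "I x < Li" "0 \<le> J x" "J x < Li" for x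
    using cI_range[OF L0] by (auto simp: I_def J_def Li_def)
  have abc: "2 \<le> int a" "2 \<le> int b" "int a + 3 \<le> Li" "int b + 3 \<le> Li"
    using ab by (auto simp: Li_def)
  have Q_iff: "x \<in> rect L c a b \<longleftrightarrow> inQ x" if "x \<in> sites L" for x :: site
    using rect_iff[OF c that, of a b] ab by (simp add: inQ_def inQ'_def I_def J_def)
  have sig: "\<sigma> x = (if inQ x \<or> x = z then 0 else -1)" if "x \<in> sites L" for x :: site
    using sdef that Q_iff[OF that] by auto
  have coords: "I (right L x) = nx Li (I x)" "J (right L x) = J x"
    "I (left L x) = px Li (I x)" "J (left L x) = J x"
    "I (up L x) = I x" "J (up L x) = nx Li (J x)"
    "I (down L x) = I x" "J (down L x) = px Li (J x)" if "x \<in> sites L" for x :: site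
  proof -
    have "I (right L x) = (I x + 1) mod Li" unfolding I_def right_def Li_def fst_conv by (rule cI_suc)
    moreover have "I (left L x) = (I x - 1) mod Li" unfolding I_def left_def Li_def fst_conv by (rule cI_pred[OF L0])
    moreover have "J (up L x) = (J x + 1) mod Li" unfolding J_def up_def Li_def snd_conv by (rule cI_suc)
    moreover have "J (down L x) = (J x - 1) mod Li" unfolding J_def down_def Li_def snd_conv by (rule cI_pred[OF L0])
    ultimately show "I (right L x) = nx Li (I x)" "J (right L x) = J x"
      "I (left L x) = px Li (I x)" "J (left L x) = J x"
      "I (up L x) = I x" "J (up L x) = nx Li (J x)"
      "I (down L x) = I x" "J (down L x) = px Li (J x)"
      using Ir[of x] by (simp_all add: zsuc zpred nx_def px_def I_def J_def right_def left_def up_def down_def)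
  qed
  have key_inj: "x = x'" if "x \<in> sites L" "x' \<in> sites L" "I x = I x'" "J x = J x'" for x x'
    using sites_key_inj[OF that(1,2)] that(3,4) by (simp add: I_def J_def)
  note NS = nb_sites
  note NF = nb_facts[OF _ L3]
  note ND = nb_distinct[OF _ L3]

  define kk where "kk (x::site) = ind (\<sigma> (right L x) = 0) + ind (\<sigma> (left L x) = 0) + ind (\<sigma> (up L x) = 0) + ind (\<sigma> (down L x) = 0)" for x
  define kQ where "kQ (x::site) = ind (inQ (right L x)) + ind (inQ (left L x)) + ind (inQ (up L x)) + ind (inQ (down L x))" for x
  define kz where "kz (x::site) = ind (right L x = z) + ind (left L x = z) + ind (up L x = z) + ind (down L x = z)" for x
  have kQ_eq: "kQ x = kq Li (int a) (int b) (I x) (J x)" if "x \<in> sites L" for x :: site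
    using coords[OF that] by (simp add: kQ_def kq_def inQ_def)
  have kk_bounds: "kQ x \<le> kk x" "kk x \<le> kQ x + kz x" "0 \<le> kk x" "kk x \<le> 4" if "x \<in> sites L" for x :: site
  proof -
    have e: "kk x = ind (inQ (right L x) \<or> right L x = z) + ind (inQ (left L x) \<or> left L x = z)
       + ind (inQ (up L x) \<or> up L x = z) + ind (inQ (down L x) \<or> down L x = z)"
      using NS[OF that] by (simp add: kk_def sig)
    show "kQ x \<le> kk x" "kk x \<le> kQ x + kz x" "0 \<le> kk x" "kk x \<le> 4"
      unfolding e kQ_def kz_def using ind_le by (smt (verit))+
  qed
  have kz_le1: "kz x \<le> 1" if "x \<in> sites L" for x :: site
    using ND[OF that] by (auto simp: kz_def ind_def)
  have kz_0: "kz x = 0" if "z \<notin> nbrs L x" for x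
    using that by (auto simp: kz_def ind_def nbrs_def)
  have kz_pos: "z \<in> nbrs L x" if "kz x \<ge> 1" for x
    using that by (auto simp: kz_def ind_def nbrs_def split: if_splits)

  have znQ: "\<not> inQ z" using Q_iff[OF z(1)] z(2) by simp
  have sz: "\<sigma> z = 0" using sig[OF z(1)] by simp
  have ynb: "y \<in> nbrs L z" and yQ: "y \<in> rect L c a b" using y(1) by auto
  have ys: "y \<in> sites L" using ynb NS[OF z(1)] by (auto simp: nbrs_def)
  have ycor: "I y \<in> {1, int a}" "J y \<in> {1, int b}"
    using corner_coords[OF y(2)] ab by (auto simp: I_def J_def)
  have wnQ: "\<not> inQ w" and wz: "w \<noteq> z" using sig[OF w(1)] w(2) by (auto split: if_splits)
  have adj_nb: "adj Li (I x) (J x) (I x') (J x')" if "x \<in> sites L" "x' \<in> nbrs L x" for x x'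
    using that coords[OF that(1)] by (auto simp: nbrs_def adj_def)
  have zp: "zpos (int a) (int b) (I z) (J z)"
    using zpos_lemma[OF Ir[of z] abc _ _ _ adj_nb[OF z(1) ynb]] znQ ycor by (auto simp: inQ_def)
  have cand: "I x = xf1 (int a) (int b) (I z) (J z) \<and> J x = xf2 (int a) (int b) (I z) (J z)"
    if "x \<in> sites L" "\<not> inQ x" "kQ x \<ge> 1" "z \<in> nbrs L x" for x
  proof -
    have "kq Li (int a) (int b) (I x) (J x) \<ge> 1" using that(3) kQ_eq[OF that(1)] by simp
    then have ob: "(1 \<le> I x \<and> I x \<le> int a \<and> (J x = 0 \<or> J x = int b + 1)) \<or>
        (1 \<le> J x \<and> J x \<le> int b \<and> (I x = 0 \<or> I x = int a + 1))"
      using geo6[OF Ir[of x] abc] that(2) by (simp add: inQ_def)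
    show ?thesis using xpos_lemma[OF Ir[of x] abc ob zp adj_nb[OF that(1,4)]] .
  qed
  have cand_eq: "x = x'" if "x \<in> sites L" "\<not> inQ x" "kQ x \<ge> 1" "z \<in> nbrs L x"
     "x' \<in> sites L" "\<not> inQ x'" "kQ x' \<ge> 1" "z \<in> nbrs L x'" for x x'
    using cand[OF that(1-4)] cand[OF that(5-8)] key_inj[OF that(1,5)] by simp
  have kkw: "kk w = 2"
  proof -
    have "int (card {y \<in> nbrs L w. \<sigma> y = 0}) = kk w"
      unfolding nbrs_def kk_def by (rule card4_filter) (use ND[OF w(1)] in auto)
    then show ?thesis using w(3) by simp
  qed
  have wcand: "kQ w \<ge> 1" "z \<in> nbrs L w"
  proof -
    have "kQ w \<le> 1" using geo1[OF Ir[of w] abc] wnQ kQ_eq[OF w(1)] by (simp add: inQ_def)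
    then show "kQ w \<ge> 1" "z \<in> nbrs L w"
      using kk_bounds[OF w(1)] kkw kz_le1[OF w(1)] kz_pos[of w] by auto
  qed
  have k_out: "kk x \<le> 1" if "x \<in> sites L" "\<not> inQ x" "x \<noteq> w" for x
  proof -
    have q1: "kQ x \<le> 1" using geo1[OF Ir[of x] abc] that(2) kQ_eq[OF that(1)] by (simp add: inQ_def)
    show ?thesis
    proof (cases "z \<in> nbrs L x \<and> kQ x \<ge> 1")
      case True
      then have "x = w" using cand_eq[OF that(1,2) _ _ w(1) wnQ wcand] by auto
      then show ?thesis using that(3) by simp
    next
      case False
      then show ?thesis using kk_bounds[OF that(1)] kz_le1[OF that(1)] kz_0[of x] q1 by force
    qed
  qed
  have kkz: "kk z = 1"
  proof -
    have e: "\<sigma> x' = 0 \<longleftrightarrow> x' = y" if "x' \<in> nbrs L z" for x'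
    proof -
      have xs: "x' \<in> sites L" and xz: "x' \<noteq> z" using that NS[OF z(1)] NF[OF z(1)] by (auto simp: nbrs_def)
      have "\<sigma> x' = 0 \<longleftrightarrow> x' \<in> rect L c a b" using sig[OF xs] xz Q_iff[OF xs] by simp
      also have "\<dots> \<longleftrightarrow> x' = y" using y(1) that by auto
      finally show ?thesis .
    qed
    have "kk z = ind (right L z = y) + ind (left L z = y) + ind (up L z = y) + ind (down L z = y)"
      unfolding kk_def using e by (simp add: nbrs_def)
    then show ?thesis using ynb ND[OF z(1)] by (auto simp: nbrs_def ind_def)
  qed
  have k_in: "2 \<le> kk x" "kk x \<ge> 3 \<or> (I x \<in> {1, int a} \<and> J x \<in> {1, int b})"
     "kk x = 4 \<or> I x \<in> {1, int a} \<or> J x \<in> {1, int b}" if "x \<in> sites L" "inQ x" for x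
  proof -
    have i: "inQ' (int a) (int b) (I x) (J x)" using that(2) by (simp add: inQ_def)
    show "2 \<le> kk x" "kk x \<ge> 3 \<or> (I x \<in> {1, int a} \<and> J x \<in> {1, int b})"
     "kk x = 4 \<or> I x \<in> {1, int a} \<or> J x \<in> {1, int b}"
      using geo2[OF Ir[of x] abc i] geo3[OF Ir[of x] abc i] geo4[OF Ir[of x] abc i] kQ_eq[OF that(1)] kk_bounds[OF that(1)]
      by auto
  qed
  have k_far: "kk x = 0" if "x \<in> sites L" "\<not> inQ x" "I x \<notin> {0, int a + 1}" "J x \<notin> {0, int b + 1}"
     "x \<notin> nbrs L z" for x
  proof -
    have "z \<notin> nbrs L x" using nb_sym[OF that(1) z(1) L3] that(5) by blast
    then have "kz x = 0" by (rule kz_0)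
    moreover have "kQ x = 0" using geo5[OF Ir[of x] abc] that(2-4) kQ_eq[OF that(1)] by (simp add: inQ_def)
    ultimately show ?thesis using kk_bounds[OF that(1)] by simp
  qed
  define rt where "rt x s = R L h \<beta> \<sigma> (flip \<sigma> x s)" for x s
  define dl where "dl x v = real_of_int (4*(v^2 - (\<sigma> x)^2) - 2*(v - \<sigma> x)*(kk x - 4)) - h * real_of_int (v - \<sigma> x)" for x v
  have nbv: "\<sigma> (right L x) \<in> {-1, 0}" "\<sigma> (left L x) \<in> {-1, 0}" "\<sigma> (up L x) \<in> {-1, 0}" "\<sigma> (down L x) \<in> {-1, 0}"
    if "x \<in> sites L" for x
    using sig[OF NS(1)[OF that]] sig[OF NS(2)[OF that]] sig[OF NS(3)[OF that]] sig[OF NS(4)[OF that]] by auto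
  have rt_eq: "rt x s = exp (- \<beta> * max 0 (dl x v))"
    if "x \<in> sites L" "s \<in> {1, -1}" "flip \<sigma> x s = \<sigma>(x := v)" for x s v
  proof -
    have ex: "\<exists>x'\<in>sites L. \<exists>s'\<in>{1, -1::int}. flip \<sigma> x s = flip \<sigma> x' s'" using that by blast
    have "H L h (\<sigma>(x := v)) - H L h \<sigma> = dl x v"
      unfolding dH[OF that(1) L3] dl_def Dform[OF nbv[OF that(1)]] kk_def by simp
    then show ?thesis using ex that(3) by (simp add: rt_def R_def)
  qed
  have fl: "flip \<sigma> x 1 = \<sigma>(x := 0)" "flip \<sigma> x (-1) = \<sigma>(x := 1)" if "\<sigma> x = -1" for x
    using that by (simp_all add: flip_def)
  have fl0: "flip \<sigma> x 1 = \<sigma>(x := 1)" "flip \<sigma> x (-1) = \<sigma>(x := -1)" if "\<sigma> x = 0" for x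
    using that by (simp_all add: flip_def)
  define e0 where "e0 = exp (- h * \<beta>)"
  define e2 where "e2 = exp (- (2 - h) * \<beta>)"
  define e4 where "e4 = exp (- (4 - h) * \<beta>)"
  have m1: "(2*h - 2) * \<beta> \<le> 0" using h \<beta> by (intro mult_nonpos_nonneg) auto
  have m2: "-2 * \<beta> \<le> 0" using \<beta> by simp
  have m3: "- (4 - h) * \<beta> \<le> - (2 - h) * \<beta>" using m2 by (simp add: algebra_simps)
  have m4: "- (2 - h) * \<beta> \<le> - h * \<beta>" using m1 by (simp add: algebra_simps)
  have eord: "0 \<le> e4" "e4 \<le> e2" "e2 \<le> e0" using m3 m4 unfolding e0_def e2_def e4_def by simp_all
  have rm_1: "rt x 1 \<le> exp (- t * \<beta>)" if "x \<in> sites L" "\<sigma> x = -1" "t \<le> 4 - 2 * real_of_int (kk x) - h" for x t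
    using rt_eq[OF that(1) _ fl(1)[OF that(2)]] expb[OF \<beta>, of t] that by (simp add: dl_def algebra_simps)
  have rm_m: "rt x (-1) \<le> exp (- t * \<beta>)" if "x \<in> sites L" "\<sigma> x = -1" "t \<le> 16 - 4 * real_of_int (kk x) - 2 * h" for x t
    using rt_eq[OF that(1) _ fl(2)[OF that(2)]] expb[OF \<beta>, of t] that by (simp add: dl_def algebra_simps)
  have r0_1: "rt x 1 \<le> exp (- t * \<beta>)" if "x \<in> sites L" "\<sigma> x = 0" "t \<le> 12 - 2 * real_of_int (kk x) - h" for x t
    using rt_eq[OF that(1) _ fl0(1)[OF that(2)]] expb[OF \<beta>, of t] that by (simp add: dl_def algebra_simps)
  have r0_m: "rt x (-1) \<le> exp (- t * \<beta>)" if "x \<in> sites L" "\<sigma> x = 0" "t \<le> 2 * real_of_int (kk x) - 4 + h" for x t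
    using rt_eq[OF that(1) _ fl0(2)[OF that(2)]] expb[OF \<beta>, of t] that by (simp add: dl_def algebra_simps)
  have rtz: "rt z (-1) = 1"
    using rt_eq[OF z(1) _ fl0(2)[OF sz]] exp1[of "dl z (-1)" \<beta>] kkz sz h by (simp add: dl_def)
  have rtw: "rt w 1 = 1"
    using rt_eq[OF w(1) _ fl(1)[OF w(2)]] exp1[of "dl w 0" \<beta>] kkw w(2) h by (simp add: dl_def)
  have rt_nn: "0 \<le> rt x s" for x s by (simp add: rt_def R_def)
  define C where "C = {x. I x \<in> {1, int a} \<and> J x \<in> {1, int b}}"
  define N where "N = {x. I x \<in> {0, 1, int a, int a + 1} \<or> J x \<in> {0, 1, int b, int b + 1} \<or> x \<in> insert z (insert w (nbrs L z))}"
  define f where "f x = rt x 1 + rt x (-1)" for x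
  define g where "g x = (if x \<in> {z, w} then 1 else 0) + 2 * e4 + (if x \<in> C then e0 else 0) + (if x \<in> N then 2 * e2 else 0)" for x
  have g_ge: "g x \<ge> (if x \<in> {z, w} then 1 else 0) + 2 * e4" for x
    using eord by (simp add: g_def)
  have g_C: "x \<in> C \<Longrightarrow> g x \<ge> 2 * e4 + e0" for x
    using eord by (simp add: g_def)
  have g_N: "x \<in> N \<Longrightarrow> g x \<ge> 2 * e4 + 2 * e2" for x
    using eord by (simp add: g_def)
  have e4d: "e4 = exp (- (4 - h) * \<beta>)" "e2 = exp (- (2 - h) * \<beta>)" "e0 = exp (- h * \<beta>)"
    by (simp_all add: e0_def e2_def e4_def)
  have fg: "f x \<le> g x" if xs: "x \<in> sites L" for x
  proof -
    have kr: "0 \<le> real_of_int (kk x)" "real_of_int (kk x) \<le> 4" using kk_bounds[OF xs] by simp_all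
    show ?thesis
    proof (cases "x = z")
      case True
      have "rt z 1 \<le> e4" using r0_1[OF z(1) sz, of "4 - h"] kkz unfolding e4d by simp
      then show ?thesis using True rtz g_ge[of z] eord eord by (simp add: f_def)
    next
      case xnz: False
      show ?thesis
      proof (cases "x = w")
        case True
        have "rt w (-1) \<le> e4" using rm_m[OF w(1) w(2), of "4 - h"] kkw h unfolding e4d by simp
        then show ?thesis using True rtw g_ge[of w] eord eord by (simp add: f_def)
      next
        case xnw: False
        show ?thesis
        proof (cases "inQ x")
          case False
          have sx: "\<sigma> x = -1" using sig[OF xs] False xnz by simp
          have k1: "real_of_int (kk x) \<le> 1" using k_out[OF xs False xnw] by simp
          have a2: "rt x (-1) \<le> e4" using rm_m[OF xs sx, of "4 - h"] k1 h unfolding e4d by simp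
          show ?thesis
          proof (cases "x \<in> N")
            case True
            have "rt x 1 \<le> e2" using rm_1[OF xs sx, of "2 - h"] k1 unfolding e4d by simp
            then show ?thesis using a2 g_N[OF True] eord eord by (simp add: f_def)
          next
            case nN: False
            have "kk x = 0" using k_far[OF xs False] nN by (auto simp: N_def)
            then have "rt x 1 \<le> e4" using rm_1[OF xs sx, of "4 - h"] unfolding e4d by simp
            then show ?thesis using a2 g_ge[of x] xnz xnw eord by (simp add: f_def)
          qed
        next
          case True
          have sx: "\<sigma> x = 0" using sig[OF xs] True by simp
          have a1: "rt x 1 \<le> e4" using r0_1[OF xs sx, of "4 - h"] kr unfolding e4d by simp
          have k2: "real_of_int (kk x) \<ge> 2" using k_in(1)[OF xs True] by simp
          show ?thesis
          proof (cases "x \<in> C")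
            case True
            have "rt x (-1) \<le> e0" using r0_m[OF xs sx, of "h"] k2 unfolding e4d by simp
            then show ?thesis using a1 g_C[OF True] eord by (simp add: f_def)
          next
            case nC: False
            show ?thesis
            proof (cases "x \<in> N")
              case True
              have "real_of_int (kk x) \<ge> 3" using k_in(2)[OF xs \<open>inQ x\<close>] nC by (auto simp: C_def)
              then have "rt x (-1) \<le> e2" using r0_m[OF xs sx, of "2 - h"] h unfolding e4d by simp
              then show ?thesis using a1 g_N[OF True] eord by (simp add: f_def)
            next
              case nN: False
              have "kk x = 4" using k_in(3)[OF xs \<open>inQ x\<close>] nN by (auto simp: N_def)
              then have "rt x (-1) \<le> e4" using r0_m[OF xs sx, of "4 - h"] h unfolding e4d by simp
              then show ?thesis using a1 g_ge[of x] xnz xnw eord by (simp add: f_def)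
            qed
          qed
        qed
      qed
    qed
  qed
  have fin: "finite (sites L)" by (simp add: sites_def)
  have cardS: "card (sites L) = L * L" by (simp add: sites_def card_cartesian_product)
  have hold: "holding_rate L h \<beta> \<sigma> = (\<Sum>x\<in>sites L. f x)"
    by (simp add: holding_rate_def f_def rt_def)
  have sumg: "(\<Sum>x\<in>sites L. g x) = real (card {x \<in> sites L. x \<in> {z, w}}) * 1 + real (card (sites L)) * (2 * e4)
      + real (card {x \<in> sites L. x \<in> C}) * e0 + real (card {x \<in> sites L. x \<in> N}) * (2 * e2)"
    unfolding g_def sum.distrib sum_if_const[OF fin] by simp
  have c1: "card {x \<in> sites L. x \<in> {z, w}} = 2"
  proof -
    have "{x \<in> sites L. x \<in> {z, w}} = {z, w}" using z(1) w(1) by auto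
    then show ?thesis using wz by simp
  qed
  have c2: "card {x \<in> sites L. x \<in> C} \<le> 4"
  proof -
    have inj: "inj_on (\<lambda>x. (I x, J x)) {x \<in> sites L. x \<in> C}"
    proof (rule inj_onI)
      fix x x' assume "x \<in> {x \<in> sites L. x \<in> C}" "x' \<in> {x \<in> sites L. x \<in> C}" "(I x, J x) = (I x', J x')"
      then show "x = x'" using key_inj by blast
    qed
    have img: "(\<lambda>x. (I x, J x)) ` {x \<in> sites L. x \<in> C} \<subseteq> {1, int a} \<times> {1, int b}"
      by (auto simp: C_def)
    have "card {x \<in> sites L. x \<in> C} \<le> card ({1, int a} \<times> {1, int b})"
      by (rule card_inj_on_le[OF inj img]) simp
    also have "\<dots> \<le> 4" by (simp add: card_cartesian_product card_insert_if)
    finally show ?thesis .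
  qed
  have c3: "card {x \<in> sites L. x \<in> N} \<le> 8 * L + 6"
  proof -
    define K1 where "K1 = {0, 1, int a, int a + 1}"
    define K2 where "K2 = {0, 1, int b, int b + 1}"
    have sub: "{x \<in> sites L. x \<in> N} \<subseteq> {x \<in> sites L. cI L (fst c) (fst x) \<in> K1}
       \<union> {x \<in> sites L. cI L (snd c) (snd x) \<in> K2} \<union> set [z, w, right L z, left L z, up L z, down L z]"
      by (auto simp: N_def K1_def K2_def I_def J_def nbrs_def)
    have k1: "card K1 \<le> 4" using card_length[of "[0, 1, int a, int a + 1]"] by (simp add: K1_def)
    have k2: "card K2 \<le> 4" using card_length[of "[0, 1, int b, int b + 1]"] by (simp add: K2_def)
    have s1: "card {x \<in> sites L. cI L (fst c) (fst x) \<in> K1} \<le> 4 * L"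
      using card_strip1[of K1 L "fst c"] k1 by (simp add: K1_def) (meson le_trans mult_le_mono1)
    have s2: "card {x \<in> sites L. cI L (snd c) (snd x) \<in> K2} \<le> 4 * L"
      using card_strip2[of K2 L "snd c"] k2 by (simp add: K2_def) (meson le_trans mult_le_mono1)
    have s3: "card (set [z, w, right L z, left L z, up L z, down L z]) \<le> 6"
      using card_length[of "[z, w, right L z, left L z, up L z, down L z]"] by simp
    have "card {x \<in> sites L. x \<in> N} \<le> card ({x \<in> sites L. cI L (fst c) (fst x) \<in> K1}
       \<union> {x \<in> sites L. cI L (snd c) (snd x) \<in> K2} \<union> set [z, w, right L z, left L z, up L z, down L z])"
      by (rule card_mono[OF _ sub]) (simp add: fin)
    also have "\<dots> \<le> card ({x \<in> sites L. cI L (fst c) (fst x) \<in> K1}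
       \<union> {x \<in> sites L. cI L (snd c) (snd x) \<in> K2}) + card (set [z, w, right L z, left L z, up L z, down L z])"
      by (rule card_Un_le)
    also have "\<dots> \<le> card {x \<in> sites L. cI L (fst c) (fst x) \<in> K1}
       + card {x \<in> sites L. cI L (snd c) (snd x) \<in> K2} + card (set [z, w, right L z, left L z, up L z, down L z])"
      using card_Un_le by (meson add_right_mono)
    finally show ?thesis using s1 s2 s3 by linarith
  qed
  define S where "S = holding_rate L h \<beta> \<sigma>"
  have Sup: "S \<le> 2 + real (L * L) * (2 * e4) + 4 * e0 + real (8 * L + 6) * (2 * e2)"
  proof -
    have "S \<le> (\<Sum>x\<in>sites L. g x)" unfolding S_def hold by (rule sum_mono) (rule fg)
    also have "\<dots> \<le> 2 + real (L * L) * (2 * e4) + 4 * e0 + real (8 * L + 6) * (2 * e2)"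
      unfolding sumg c1 cardS
    proof -
      have "real (card {x \<in> sites L. x \<in> C}) * e0 \<le> 4 * e0"
        using c2 eord by (intro mult_right_mono) auto
      moreover have "real (card {x \<in> sites L. x \<in> N}) * (2 * e2) \<le> real (8 * L + 6) * (2 * e2)"
        using c3 eord by (intro mult_right_mono) auto
      ultimately show "real 2 * 1 + real (L * L) * (2 * e4) + real (card {x \<in> sites L. x \<in> C}) * e0 +
          real (card {x \<in> sites L. x \<in> N}) * (2 * e2) \<le> 2 + real (L * L) * (2 * e4) + 4 * e0 + real (8 * L + 6) * (2 * e2)"
        by simp
    qed
    finally show ?thesis .
  qed
  have Slow: "S \<ge> 2"
  proof -
    have fnn: "0 \<le> f x" for x using rt_nn by (simp add: f_def add_nonneg_nonneg)
    have "f z + f w = (\<Sum>x\<in>{z, w}. f x)" using wz by simp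
    also have "\<dots> \<le> (\<Sum>x\<in>sites L. f x)"
      by (rule sum_mono2[OF fin]) (use z(1) w(1) fnn in auto)
    finally have "f z + f w \<le> S" unfolding S_def hold .
    moreover have "f z \<ge> 1" "f w \<ge> 1" using rtz rtw rt_nn by (simp_all add: f_def)
    ultimately show ?thesis by linarith
  qed
  have pz: "p L h \<beta> \<sigma> (\<sigma>(z := -1)) = 1 / S"
    using rtz fl0(2)[OF sz] by (simp add: p_def rt_def S_def)
  have pw: "p L h \<beta> \<sigma> (\<sigma>(w := 0)) = 1 / S"
    using rtw fl(1)[OF w(2)] by (simp add: p_def rt_def S_def)
  have d1: "delta1 L h \<beta> = e0 + real L * e2 + real L * real L * e4"
    unfolding delta1_def cardS e0_def e2_def e4_def by (simp add: real_sqrt_mult_self)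
  have main: "\<bar>1 / S - 1/2\<bar> \<le> 5 * delta1 L h \<beta>"
  proof -
    have Spos: "S > 0" using Slow by simp
    have "1 / S \<le> 1/2" using Slow by (simp add: field_simps)
    then have "\<bar>1 / S - 1/2\<bar> = 1/2 - 1/S" by simp
    also have "\<dots> = (S - 2) / (2 * S)" using Spos by (simp add: field_simps)
    also have "\<dots> \<le> (S - 2) / 4"
      by (rule divide_left_mono) (use Slow in auto)
    also have "\<dots> \<le> 5 * delta1 L h \<beta>"
    proof -
      have L3r: "real L \<ge> 3" using L3 by simp
      have "3 * e2 \<le> real L * e2" using L3r eord by (intro mult_right_mono) auto
      moreover have "0 \<le> real L * real L * e4" using eord by simp
      moreover have "0 \<le> e0" "0 \<le> e2" using eord by auto
      ultimately show ?thesis using Sup unfolding d1 by (simp add: algebra_simps)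
    qed
    finally show ?thesis .
  qed
  show ?thesis using main pz pw by simp
qed

theorem mainTheorem16:
  fixes h :: real
  assumes "0 < h" "h < 1" "2 / h \<notin> \<int>"
  shows "\<exists>C0::real. \<forall>(L::nat) (n::nat) (m::nat) (\<beta>::real) (\<sigma>::config) (c::site) (Q::site set) (z::site) (w::site).
     nat \<lfloor>2 / h\<rfloor> \<le> m \<and> m \<le> n \<and> n + 3 \<le> L \<and> 0 < \<beta> \<and>
     \<sigma> \<in> Omega L \<and> c \<in> sites L \<and>
     (Q = rect L c n m \<or> Q = rect L c m n) \<and>
     z \<in> sites L \<and> z \<notin> Q \<and>
     (\<forall>x\<in>sites L. \<sigma> x = (if x \<in> Q \<or> x = z then 0 else -1)) \<and>
     (\<exists>y. nbrs L z \<inter> Q = {y} \<and>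
        y \<in> (if Q = rect L c n m then corners L c n m else corners L c m n)) \<and>
     w \<in> sites L \<and> \<sigma> w = -1 \<and> card {y \<in> nbrs L w. \<sigma> y = 0} = 2
     \<longrightarrow> \<bar>p L h \<beta> \<sigma> (\<sigma>(z := -1)) - 1/2\<bar> \<le> C0 * delta1 L h \<beta>
       \<and> \<bar>p L h \<beta> \<sigma> (\<sigma>(w := 0)) - 1/2\<bar> \<le> C0 * delta1 L h \<beta>"
proof -
  have "2 < 2 / h" using assms(1,2) by (simp add: field_simps)
  then have fl2: "2 \<le> \<lfloor>2 / h\<rfloor>" by (simp add: le_floor_iff)
  show ?thesis
  proof (rule exI[of _ 5], intro allI impI)
    fix L n m :: nat and \<beta> :: real and \<sigma> :: config and c :: site and Q :: "site set" and z w :: site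
    assume H: "nat \<lfloor>2 / h\<rfloor> \<le> m \<and> m \<le> n \<and> n + 3 \<le> L \<and> 0 < \<beta> \<and>
     \<sigma> \<in> Omega L \<and> c \<in> sites L \<and>
     (Q = rect L c n m \<or> Q = rect L c m n) \<and>
     z \<in> sites L \<and> z \<notin> Q \<and>
     (\<forall>x\<in>sites L. \<sigma> x = (if x \<in> Q \<or> x = z then 0 else -1)) \<and>
     (\<exists>y. nbrs L z \<inter> Q = {y} \<and>
        y \<in> (if Q = rect L c n m then corners L c n m else corners L c m n)) \<and>
     w \<in> sites L \<and> \<sigma> w = -1 \<and> card {y \<in> nbrs L w. \<sigma> y = 0} = 2"
    have m2: "2 \<le> m" using H fl2 by linarith
    obtain y where y: "nbrs L z \<inter> Q = {y}" "y \<in> (if Q = rect L c n m then corners L c n m else corners L c m n)"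
      using H by blast
    show "\<bar>p L h \<beta> \<sigma> (\<sigma>(z := -1)) - 1/2\<bar> \<le> 5 * delta1 L h \<beta>
       \<and> \<bar>p L h \<beta> \<sigma> (\<sigma>(w := 0)) - 1/2\<bar> \<le> 5 * delta1 L h \<beta>"
    proof (cases "Q = rect L c n m")
      case True
      show ?thesis
        by (rule general[where a = n and b = m and c = c and y = y]) (use H True y m2 assms(1,2) in auto)
    next
      case False
      then have Qe: "Q = rect L c m n" using H by blast
      show ?thesis
        by (rule general[where a = m and b = n and c = c and y = y]) (use H False Qe y m2 assms(1,2) in auto)
    qed
  qed
qed

end
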